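(* Let $q$ be even, $P_{22}\in\mathbb{S}_q$ with $P_{22}\succ0$, $Q_{22}\in\mathbb{S}_q$ with $Q_{22}\succ0$, $\Theta_2\in\mathbb{A}_q$ nonsingular, and suppose the complex Hermitian matrix $P_{22}+i\Theta_2$ is positive semi-definite. Let $\Xi\in\mathbb{A}_q$, and set $N:=Q_{22}^{-1}\Xi$, $S:=\Theta_2P_{22}^{-1}$. Let $D\in\mathbb{R}^{p\times m_1}$ with $DD^{T}=I_p$ and $\Delta:=DJ_1D^{T}$. If $\rho(N)<1$, then the three linear operators $$X\mapsto X-NXS\ \text{on}\ \mathbb{R}^{q\times q},\qquad X\mapsto X-NXJ_2\ \text{on}\ \mathbb{R}^{q\times m_2},\qquad X\mapsto X-NX\Delta\ \text{on}\ \mathbb{R}^{q\times p}$$ are all invertible.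
   Context: $\mathbb{S}_k$ and $\mathbb{A}_k$ denote the spaces of real symmetric and real antisymmetric $k\times k$ matrices; $\rho(\cdot)$ is the spectral radius; $i=\sqrt{-1}$. For even $m_k$, $\mu_k=m_k/2$ and $J_k:=\begin{bmatrix}0&I_{\mu_k}\\-I_{\mu_k}&0\end{bmatrix}$ ($k=1,2$). *)

theory Defs
  imports "Jordan_Normal_Form.Spectral_Radius"
begin

definition sym_mat :: "nat \<Rightarrow> real mat \<Rightarrow> bool" where
  "sym_mat n A \<longleftrightarrow> A \<in> carrier_mat n n \<and> A\<^sup>T = A"

definition antisym_mat :: "nat \<Rightarrow> real mat \<Rightarrow> bool" where
  "antisym_mat n A \<longleftrightarrow> A \<in> carrier_mat n n \<and> A\<^sup>T = - A"

definition pos_def_mat :: "nat \<Rightarrow> real mat \<Rightarrow> bool" where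
  "pos_def_mat n A \<longleftrightarrow> A \<in> carrier_mat n n \<and>
     (\<forall>v \<in> carrier_vec n. v \<noteq> 0\<^sub>v n \<longrightarrow> v \<bullet> (A *\<^sub>v v) > 0)"

definition herm_psd_mat :: "nat \<Rightarrow> complex mat \<Rightarrow> bool" where
  "herm_psd_mat n H \<longleftrightarrow> H \<in> carrier_mat n n \<and>
     (\<forall>i<n. \<forall>j<n. H $$ (i, j) = cnj (H $$ (j, i))) \<and>
     (\<forall>v \<in> carrier_vec n.
        Im (\<Sum>i<n. \<Sum>j<n. cnj (v $ i) * H $$ (i, j) * v $ j) = 0 \<and>
        Re (\<Sum>i<n. \<Sum>j<n. cnj (v $ i) * H $$ (i, j) * v $ j) \<ge> 0)"

(* J = [[0, I_mu], [-I_mu, 0]] of size m = 2 mu *)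
definition J_mat :: "nat \<Rightarrow> real mat" where
  "J_mat m = mat m m (\<lambda>(i, j).
      if i < m div 2 \<and> j = i + m div 2 then 1
      else if m div 2 \<le> i \<and> j + m div 2 = i then -1 else 0)"

definition plus_i_mat :: "real mat \<Rightarrow> real mat \<Rightarrow> complex mat" where
  "plus_i_mat P T = map_mat complex_of_real P + smult_mat \<i> (map_mat complex_of_real T)"

end

theory Submission
  imports Defs
begin

lemma ut_diag_eigenvalue:
  fixes T :: "complex mat"
  assumes T: "T \<in> carrier_mat n n" and ut: "upper_triangular T" and j: "j < n"
  shows "eigenvalue T (T $$ (j,j))"
proof -
  have cp: "char_poly T = (\<Prod> a \<leftarrow> diag_mat T. [:- a, 1:])"
    by (rule char_poly_upper_triangular[OF T ut])
  have mem: "T $$ (j,j) \<in> set (diag_mat T)" using T j unfolding diag_mat_def by auto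
  have "poly (\<Prod> a \<leftarrow> diag_mat T. [:- a, 1:]) (T $$ (j,j)) = 0"
    using mem by (induct "diag_mat T", auto simp: poly_prod_list)
  thus ?thesis unfolding eigenvalue_root_char_poly[OF T] cp .
qed

lemma triangularize:
  fixes B :: "complex mat"
  assumes B: "B \<in> carrier_mat n n"
  shows "\<exists>T P Q. T \<in> carrier_mat n n \<and> P \<in> carrier_mat n n \<and> Q \<in> carrier_mat n n \<and>
     P * Q = 1\<^sub>m n \<and> Q * P = 1\<^sub>m n \<and> B = P * T * Q \<and> upper_triangular T \<and>
     (\<forall>j<n. eigenvalue B (T $$ (j,j)))"
proof -
  from char_poly_factorized[OF B] obtain as where cB: "char_poly B = (\<Prod> a \<leftarrow> as. [:- a, 1:])" by auto
  from jordan_nf_exists[OF B cB] obtain n_as where jnf: "jordan_nf B n_as" by auto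
  let ?T = "jordan_matrix n_as"
  from jnf have sim: "similar_mat B ?T" unfolding jordan_nf_def by auto
  then obtain P Q where w: "similar_mat_wit B ?T P Q" unfolding similar_mat_def by auto
  from w B have T: "?T \<in> carrier_mat n n" and P: "P \<in> carrier_mat n n" and Q: "Q \<in> carrier_mat n n"
    and PQ: "P * Q = 1\<^sub>m n" "Q * P = 1\<^sub>m n" and e: "B = P * ?T * Q"
    unfolding similar_mat_wit_def Let_def by auto
  have ut: "upper_triangular ?T"
    using T by (intro upper_triangularI jordan_matrix_upper_triangular, auto)
  have cpe: "char_poly B = char_poly ?T" by (rule char_poly_similar[OF sim])
  have "\<forall>j<n. eigenvalue B (?T $$ (j,j))"
    using ut_diag_eigenvalue[OF T ut] unfolding eigenvalue_root_char_poly[OF T] eigenvalue_root_char_poly[OF B] cpe by auto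
  thus ?thesis using T P Q PQ e ut by blast
qed

lemma kernel_zero:
  fixes N B X :: "complex mat"
  assumes N: "N \<in> carrier_mat q q" and B: "B \<in> carrier_mat n n" and X: "X \<in> carrier_mat q n"
  and eq: "X = N * X * B"
  and evB: "\<And>\<mu>. eigenvalue B \<mu> \<Longrightarrow> cmod \<mu> \<le> 1"
  and Nok: "\<And>\<mu> v. cmod \<mu> \<le> 1 \<Longrightarrow> v \<in> carrier_vec q \<Longrightarrow> v = \<mu> \<cdot>\<^sub>v (N *\<^sub>v v) \<Longrightarrow> v = 0\<^sub>v q"
  shows "X = 0\<^sub>m q n"
proof -
  from triangularize[OF B] obtain T P Q where T: "T \<in> carrier_mat n n" and P: "P \<in> carrier_mat n n"
    and Q: "Q \<in> carrier_mat n n" and PQ: "P * Q = 1\<^sub>m n" and QP: "Q * P = 1\<^sub>m n"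
    and Be: "B = P * T * Q" and ut: "upper_triangular T" and ev: "\<forall>j<n. eigenvalue B (T $$ (j,j))"
    by blast
  define Y where "Y = X * P"
  have Y: "Y \<in> carrier_mat q n" unfolding Y_def using X P by auto
  have "X * P = N * X * B * P" using eq by (rule arg_cong[where f="\<lambda>Z. Z * P"])
  hence "Y = N * X * (P * T * Q) * P" unfolding Y_def Be .
  also have "\<dots> = N * (X * P) * T * (Q * P)"
  proof -
    have PT: "P * T \<in> carrier_mat n n" using P T by auto
    have PTQ: "P * T * Q \<in> carrier_mat n n" using P T Q by auto
    have NX: "N * X \<in> carrier_mat q n" using N X by auto
    have QP': "Q * P \<in> carrier_mat n n" using Q P by auto
    have e1: "N * X * (P * T * Q) * P = N * X * (P * T * (Q * P))"
      unfolding assoc_mult_mat[OF NX PTQ P] assoc_mult_mat[OF PT Q P] ..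
    have e2: "N * (X * P) * T * (Q * P) = N * X * (P * T * (Q * P))"
      unfolding assoc_mult_mat[OF N X P, symmetric] assoc_mult_mat[OF NX P T]
        assoc_mult_mat[OF NX PT QP'] ..
    show ?thesis unfolding e1 e2 ..
  qed
  also have "\<dots> = N * Y * T" unfolding QP Y_def using N X P T by simp
  finally have Yeq: "Y = N * Y * T" .
  have colz: "col Y j = 0\<^sub>v q" if "j < n" for j
    using that
  proof (induct j rule: less_induct)
    case (less j)
    have Tjj: "cmod (T $$ (j,j)) \<le> 1" using evB ev less(2) by auto
    have "col Y j = col (N * Y * T) j" using Yeq by (rule arg_cong)
    also have "\<dots> = (N * Y) *\<^sub>v col T j" using N Y T less(2) by (intro col_mult2, auto)
    also have "\<dots> = N *\<^sub>v (Y *\<^sub>v col T j)" using N Y T less(2)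
      by (intro assoc_mult_mat_vec, auto)
    finally have c1: "col Y j = N *\<^sub>v (Y *\<^sub>v col T j)" .
    have c2: "Y *\<^sub>v col T j = T $$ (j,j) \<cdot>\<^sub>v col Y j"
    proof (rule eq_vecI)
      fix a assume a: "a < dim_vec (T $$ (j,j) \<cdot>\<^sub>v col Y j)"
      hence a: "a < q" using Y by auto
      have "(Y *\<^sub>v col T j) $ a = (\<Sum>k<n. Y $$ (a,k) * T $$ (k,j))"
        using a Y T less(2) by (simp add: scalar_prod_def lessThan_atLeast0)
      also have "\<dots> = (\<Sum>k\<in>{j}. Y $$ (a,k) * T $$ (k,j))"
      proof (rule sum.mono_neutral_right)
        show "\<forall>k\<in>{..<n} - {j}. Y $$ (a,k) * T $$ (k,j) = 0"
        proof
          fix k assume k: "k \<in> {..<n} - {j}"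
          show "Y $$ (a,k) * T $$ (k,j) = 0"
          proof (cases "k < j")
            case True
            have "col Y k = 0\<^sub>v q" using less(1)[OF True] True less(2) by auto
            hence "col Y k $ a = 0" using a by simp
            thus ?thesis using a Y k True less(2) by simp
          next
            case False
            with k have "j < k" by auto
            hence "T $$ (k,j) = 0" using ut T k unfolding upper_triangular_def by auto
            thus ?thesis by simp
          qed
        qed
      qed (insert less(2), auto)
      also have "\<dots> = (T $$ (j,j) \<cdot>\<^sub>v col Y j) $ a" using a Y less(2) by simp
      finally show "(Y *\<^sub>v col T j) $ a = (T $$ (j,j) \<cdot>\<^sub>v col Y j) $ a" .
    qed (insert Y T, simp)
    have c3: "col Y j = N *\<^sub>v (T $$ (j,j) \<cdot>\<^sub>v col Y j)" using c1 unfolding c2 .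
    also have "\<dots> = T $$ (j,j) \<cdot>\<^sub>v (N *\<^sub>v col Y j)"
      by (rule mult_mat_vec[OF N], insert Y less(2), auto)
    finally have "col Y j = T $$ (j,j) \<cdot>\<^sub>v (N *\<^sub>v col Y j)" .
    from Nok[OF Tjj _ this] show ?case using Y less(2) by auto
  qed
  have Y0: "Y = 0\<^sub>m q n"
    by (rule mat_col_eqI, insert colz Y, auto)
  have "X = X * (P * Q)" using X PQ by simp
  also have "\<dots> = Y * Q" unfolding Y_def using X P Q by simp
  also have "\<dots> = 0\<^sub>m q n" using Y0 Q by simp
  finally show ?thesis .
qed

abbreviation cm :: "real mat \<Rightarrow> complex mat" where "cm \<equiv> map_mat complex_of_real"

lemma Nok_sr:
  fixes N :: "complex mat"
  assumes N: "N \<in> carrier_mat q q" and sr: "spectral_radius N < 1"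
  and mu: "cmod \<mu> \<le> 1" and v: "v \<in> carrier_vec q" and e: "v = \<mu> \<cdot>\<^sub>v (N *\<^sub>v v)"
  shows "v = 0\<^sub>v q"
proof (rule ccontr)
  assume nz: "v \<noteq> 0\<^sub>v q"
  have mu0: "\<mu> \<noteq> 0"
  proof
    assume "\<mu> = 0"
    hence "v = 0 \<cdot>\<^sub>v (N *\<^sub>v v)" using e by simp
    also have "\<dots> = 0\<^sub>v q" using N by (intro eq_vecI, auto)
    finally show False using nz by simp
  qed
  have "(1/\<mu>) \<cdot>\<^sub>v v = (1/\<mu>) \<cdot>\<^sub>v (\<mu> \<cdot>\<^sub>v (N *\<^sub>v v))" using e by (rule arg_cong)
  also have "\<dots> = N *\<^sub>v v" by (rule eq_vecI, insert mu0, auto)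
  finally have Nv: "N *\<^sub>v v = (1/\<mu>) \<cdot>\<^sub>v v" by simp
  have "eigenvector N v (1/\<mu>)" unfolding eigenvector_def using N v nz Nv by auto
  hence ev: "eigenvalue N (1/\<mu>)" unfolding eigenvalue_def by auto
  have q: "q > 0"
  proof (rule ccontr)
    assume "\<not> q > 0" hence "q = 0" by auto
    with v nz show False by auto
  qed
  have "norm (1/\<mu>) \<le> spectral_radius N"
    by (rule spectral_radius_mem_max(2)[OF N q], insert ev, auto simp: spectrum_def)
  moreover have "norm (1/\<mu>) \<ge> 1" using mu mu0 by (simp add: norm_divide field_simps)
  ultimately show False using sr by auto
qed

lemma eigenvalue_transpose:
  fixes A :: "'a :: field mat"
  assumes A: "A \<in> carrier_mat n n"
  shows "eigenvalue A\<^sup>T \<mu> = eigenvalue A \<mu>"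
proof -
  have At: "A\<^sup>T \<in> carrier_mat n n" using A by auto
  show ?thesis unfolding eigenvalue_root_char_poly[OF A] eigenvalue_root_char_poly[OF At]
    char_poly_transpose_mat[OF A] ..
qed

definition qf :: "complex mat \<Rightarrow> complex vec \<Rightarrow> complex" where
  "qf A u = (\<Sum>i<dim_vec u. cnj (u $ i) * (A *\<^sub>v u) $ i)"

lemma cm_mv_index:
  assumes A: "A \<in> carrier_mat n m" and u: "u \<in> carrier_vec m" and i: "i < n"
  shows "(cm A *\<^sub>v u) $ i = (\<Sum>j<m. of_real (A $$ (i,j)) * u $ j)"
  using A u i by (simp add: scalar_prod_def lessThan_atLeast0)

lemma qf_cm:
  assumes A: "A \<in> carrier_mat n n" and u: "u \<in> carrier_vec n"
  shows "qf (cm A) u = (\<Sum>i<n. \<Sum>j<n. cnj (u $ i) * (of_real (A $$ (i,j)) * u $ j))"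
  unfolding qf_def using u by (intro sum.cong, auto simp: cm_mv_index[OF A u] sum_distrib_left)

lemma herm_qf:
  assumes P: "P \<in> carrier_mat q q" and T: "Th \<in> carrier_mat q q" and u: "u \<in> carrier_vec q"
  shows "(\<Sum>i<q. \<Sum>j<q. cnj (u $ i) * plus_i_mat P Th $$ (i, j) * u $ j)
    = qf (cm P) u + \<i> * qf (cm Th) u"
proof -
  have "(\<Sum>i<q. \<Sum>j<q. cnj (u $ i) * plus_i_mat P Th $$ (i, j) * u $ j)
    = (\<Sum>i<q. \<Sum>j<q. cnj (u $ i) * (of_real (P $$ (i,j)) * u $ j)
        + \<i> * (cnj (u $ i) * (of_real (Th $$ (i,j)) * u $ j)))"
    using P T by (intro sum.cong refl, auto simp: plus_i_mat_def algebra_simps)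
  also have "\<dots> = qf (cm P) u + \<i> * qf (cm Th) u"
    unfolding qf_cm[OF P u] qf_cm[OF T u]
    by (simp add: sum.distrib sum_distrib_left)
  finally show ?thesis .
qed

lemma qf_pos:
  assumes sP: "sym_mat q P" and pP: "pos_def_mat q P" and u: "u \<in> carrier_vec q" and nz: "u \<noteq> 0\<^sub>v q"
  shows "Im (qf (cm P) u) = 0 \<and> Re (qf (cm P) u) > 0"
proof -
  have P: "P \<in> carrier_mat q q" using sP unfolding sym_mat_def by auto
  have Ps: "P $$ (j,i) = P $$ (i,j)" if "i < q" "j < q" for i j
  proof -
    have "P\<^sup>T $$ (i,j) = P $$ (i,j)" using sP unfolding sym_mat_def by auto
    thus ?thesis using P that by auto
  qed
  define a where "a = vec q (\<lambda>i. Re (u $ i))"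
  define b where "b = vec q (\<lambda>i. Im (u $ i))"
  have ab: "a \<in> carrier_vec q" "b \<in> carrier_vec q" unfolding a_def b_def by auto
  have qa: "a \<bullet> (P *\<^sub>v a) = (\<Sum>i<q. \<Sum>j<q. P $$ (i,j) * (Re (u $ i) * Re (u $ j)))"
    using P unfolding a_def
    by (simp add: scalar_prod_def lessThan_atLeast0 sum_distrib_left algebra_simps)
  have qb: "b \<bullet> (P *\<^sub>v b) = (\<Sum>i<q. \<Sum>j<q. P $$ (i,j) * (Im (u $ i) * Im (u $ j)))"
    using P unfolding b_def
    by (simp add: scalar_prod_def lessThan_atLeast0 sum_distrib_left algebra_simps)
  have "Re (qf (cm P) u) = (\<Sum>i<q. \<Sum>j<q. P $$ (i,j) * (Re (u $ i) * Re (u $ j))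
     + P $$ (i,j) * (Im (u $ i) * Im (u $ j)))"
    unfolding qf_cm[OF P u] Re_sum by (intro sum.cong refl, simp add: algebra_simps)
  also have "\<dots> = a \<bullet> (P *\<^sub>v a) + b \<bullet> (P *\<^sub>v b)" unfolding qa qb by (simp add: sum.distrib)
  finally have re: "Re (qf (cm P) u) = a \<bullet> (P *\<^sub>v a) + b \<bullet> (P *\<^sub>v b)" .
  have ge: "v \<bullet> (P *\<^sub>v v) \<ge> 0" if "v \<in> carrier_vec q" for v
  proof (cases "v = 0\<^sub>v q")
    case True thus ?thesis using P by (simp add: scalar_prod_def)
  next
    case False thus ?thesis using pP that unfolding pos_def_mat_def by (auto intro: less_imp_le)
  qed
  have "a \<noteq> 0\<^sub>v q \<or> b \<noteq> 0\<^sub>v q"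
  proof (rule ccontr)
    assume "\<not> (a \<noteq> 0\<^sub>v q \<or> b \<noteq> 0\<^sub>v q)"
    hence "a = 0\<^sub>v q" "b = 0\<^sub>v q" by auto
    hence "u = 0\<^sub>v q"
    proof (intro eq_vecI)
      fix i assume "a = 0\<^sub>v q" "b = 0\<^sub>v q" "i < dim_vec (0\<^sub>v q :: complex vec)"
      hence i: "i < q" and "a $ i = 0" "b $ i = 0" by auto
      hence "Re (u $ i) = 0" "Im (u $ i) = 0" unfolding a_def b_def by auto
      thus "u $ i = 0\<^sub>v q $ i" using \<open>i < dim_vec (0\<^sub>v q :: complex vec)\<close> by (simp add: complex_eq_iff)
    qed (insert u, auto)
    with nz show False by auto
  qed
  hence "a \<bullet> (P *\<^sub>v a) > 0 \<or> b \<bullet> (P *\<^sub>v b) > 0" using pP ab unfolding pos_def_mat_def by auto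
  hence pos: "Re (qf (cm P) u) > 0" unfolding re using ge[OF ab(1)] ge[OF ab(2)] by auto
  have "Im (qf (cm P) u) = (\<Sum>i<q. \<Sum>j<q. P $$ (i,j) * (Re (u $ i) * Im (u $ j)))
      - (\<Sum>i<q. \<Sum>j<q. P $$ (i,j) * (Im (u $ i) * Re (u $ j)))"
    unfolding qf_cm[OF P u] Im_sum sum_subtractf[symmetric]
    by (intro sum.cong refl, simp add: algebra_simps)
  also have "(\<Sum>i<q. \<Sum>j<q. P $$ (i,j) * (Im (u $ i) * Re (u $ j)))
      = (\<Sum>j<q. \<Sum>i<q. P $$ (i,j) * (Im (u $ i) * Re (u $ j)))" by (rule sum.swap)
  also have "\<dots> = (\<Sum>i<q. \<Sum>j<q. P $$ (i,j) * (Re (u $ i) * Im (u $ j)))"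
    by (intro sum.cong refl, simp add: Ps algebra_simps)
  finally have "Im (qf (cm P) u) = 0" by simp
  with pos show ?thesis by simp
qed

lemma conj_mv:
  assumes A: "A \<in> carrier_mat n m" and u: "u \<in> carrier_vec m"
  shows "cm A *\<^sub>v vec m (\<lambda>i. cnj (u $ i)) = vec n (\<lambda>i. cnj ((cm A *\<^sub>v u) $ i))"
proof (rule eq_vecI)
  fix i assume "i < dim_vec (vec n (\<lambda>i. cnj ((cm A *\<^sub>v u) $ i)))"
  hence i: "i < n" by simp
  have u': "vec m (\<lambda>i. cnj (u $ i)) \<in> carrier_vec m" by simp
  show "(cm A *\<^sub>v vec m (\<lambda>i. cnj (u $ i))) $ i = vec n (\<lambda>i. cnj ((cm A *\<^sub>v u) $ i)) $ i"
    unfolding cm_mv_index[OF A u' i] index_vec[OF i] cm_mv_index[OF A u i] cnj_sum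
    by (intro sum.cong refl, simp)
qed (insert A, auto)

lemma half_bound:
  assumes sP: "sym_mat q P" and pP: "pos_def_mat q P" and T: "Th \<in> carrier_mat q q"
  and herm: "herm_psd_mat q (plus_i_mat P Th)"
  and u: "u \<in> carrier_vec q" and nz: "u \<noteq> 0\<^sub>v q"
  and e: "cm Th *\<^sub>v u = (-\<mu>) \<cdot>\<^sub>v (cm P *\<^sub>v u)"
  shows "Re \<mu> = 0 \<and> Im \<mu> \<ge> -1"
proof -
  have P: "P \<in> carrier_mat q q" using sP unfolding sym_mat_def by auto
  have "qf (cm Th) u = (\<Sum>i<q. cnj (u $ i) * ((-\<mu>) * (cm P *\<^sub>v u) $ i))"
    unfolding qf_def e using u P by (intro sum.cong, auto)
  also have "\<dots> = - \<mu> * qf (cm P) u" unfolding qf_def using u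
    by (simp add: sum_distrib_left algebra_simps flip: sum_negf)
  finally have qT: "qf (cm Th) u = - \<mu> * qf (cm P) u" .
  from qf_pos[OF sP pP u nz] have im0: "Im (qf (cm P) u) = 0" and rpos: "Re (qf (cm P) u) > 0" by auto
  define r where "r = Re (qf (cm P) u)"
  have qP: "qf (cm P) u = of_real r" unfolding r_def using im0 by (simp add: complex_eq_iff)
  from herm u have "Im (\<Sum>i<q. \<Sum>j<q. cnj (u $ i) * plus_i_mat P Th $$ (i, j) * u $ j) = 0 \<and>
     Re (\<Sum>i<q. \<Sum>j<q. cnj (u $ i) * plus_i_mat P Th $$ (i, j) * u $ j) \<ge> 0"
    unfolding herm_psd_mat_def by blast
  hence "Im (of_real r * (1 - \<i> * \<mu>)) = 0 \<and> Re (of_real r * (1 - \<i> * \<mu>)) \<ge> 0"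
    unfolding herm_qf[OF P T u] qT qP by (simp add: algebra_simps)
  hence "r * Re \<mu> = 0 \<and> r * (1 + Im \<mu>) \<ge> 0" by (simp add: algebra_simps)
  moreover have "r > 0" using rpos r_def by simp
  ultimately show ?thesis by (auto simp: zero_le_mult_iff)
qed

lemma eig_S_bound:
  assumes sP: "sym_mat q P" and pP: "pos_def_mat q P" and aT: "antisym_mat q Th"
  and herm: "herm_psd_mat q (plus_i_mat P Th)"
  and S: "S \<in> carrier_mat q q" and SP: "S * P = Th"
  and ev: "eigenvalue (cm S) \<mu>"
  shows "cmod \<mu> \<le> 1"
proof -
  have P: "P \<in> carrier_mat q q" using sP unfolding sym_mat_def by auto
  have Pt: "P\<^sup>T = P" using sP unfolding sym_mat_def by auto
  have T: "Th \<in> carrier_mat q q" and Tt: "Th\<^sup>T = - Th" using aT unfolding antisym_mat_def by auto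
  have St: "S\<^sup>T \<in> carrier_mat q q" using S by auto
  have PSt: "P * S\<^sup>T = - Th"
  proof -
    have "P * S\<^sup>T = (S * P)\<^sup>T" using P S by (simp add: transpose_mult Pt)
    thus ?thesis using SP Tt by simp
  qed
  have key: "cm Th *\<^sub>v u = (-\<nu>) \<cdot>\<^sub>v (cm P *\<^sub>v u)"
    if u: "u \<in> carrier_vec q" and eu: "cm (S\<^sup>T) *\<^sub>v u = \<nu> \<cdot>\<^sub>v u" for u \<nu>
  proof -
    have "cm (P * S\<^sup>T) *\<^sub>v u = cm P *\<^sub>v (cm (S\<^sup>T) *\<^sub>v u)"
      unfolding of_real_hom.mat_hom_mult[OF P St] using P St u by simp
    also have "\<dots> = \<nu> \<cdot>\<^sub>v (cm P *\<^sub>v u)" unfolding eu using P u by (intro mult_mat_vec, auto)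
    finally have "cm (- Th) *\<^sub>v u = \<nu> \<cdot>\<^sub>v (cm P *\<^sub>v u)" unfolding PSt .
    moreover have "cm (- Th) *\<^sub>v u = - (cm Th *\<^sub>v u)"
    proof (rule eq_vecI)
      fix i assume "i < dim_vec (- (cm Th *\<^sub>v u))"
      hence i: "i < q" using T by simp
      have mT: "- Th \<in> carrier_mat q q" using T by simp
      show "(cm (- Th) *\<^sub>v u) $ i = (- (cm Th *\<^sub>v u)) $ i"
        unfolding cm_mv_index[OF mT u i] using i T
        by (simp add: cm_mv_index[OF T u i] sum_negf[symmetric])
    qed (insert T, auto)
    ultimately have "cm Th *\<^sub>v u = - (\<nu> \<cdot>\<^sub>v (cm P *\<^sub>v u))"
      by (metis uminus_uminus_vec)
    also have "\<dots> = (-\<nu>) \<cdot>\<^sub>v (cm P *\<^sub>v u)" by (intro eq_vecI, auto)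
    finally show ?thesis .
  qed
  have cS: "cm S \<in> carrier_mat q q" using S by simp
  have "eigenvalue (cm S)\<^sup>T \<mu>" using ev eigenvalue_transpose[OF cS] by simp
  then obtain u where "eigenvector (cm (S\<^sup>T)) u \<mu>" unfolding eigenvalue_def map_mat_transpose by auto
  hence u: "u \<in> carrier_vec q" and nz: "u \<noteq> 0\<^sub>v q" and eu: "cm (S\<^sup>T) *\<^sub>v u = \<mu> \<cdot>\<^sub>v u"
    unfolding eigenvector_def using S by auto
  from half_bound[OF sP pP T herm u nz key[OF u eu]] have h1: "Re \<mu> = 0" "Im \<mu> \<ge> -1" by auto
  define u' where "u' = vec q (\<lambda>i. cnj (u $ i))"
  have u': "u' \<in> carrier_vec q" unfolding u'_def by auto
  have nz': "u' \<noteq> 0\<^sub>v q"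
  proof
    assume "u' = 0\<^sub>v q"
    hence "u = 0\<^sub>v q" unfolding u'_def using u
      by (intro eq_vecI, auto, metis complex_cnj_zero_iff dim_vec index_vec index_zero_vec(1))
    with nz show False by auto
  qed
  have eu': "cm (S\<^sup>T) *\<^sub>v u' = cnj \<mu> \<cdot>\<^sub>v u'"
    unfolding u'_def conj_mv[OF St u] eu using u by (intro eq_vecI, auto)
  from half_bound[OF sP pP T herm u' nz' key[OF u' eu']] have h2: "Im \<mu> \<le> 1" by auto
  have "cmod \<mu> = \<bar>Im \<mu>\<bar>" using h1 by (simp add: cmod_def)
  thus ?thesis using h1 h2 by auto
qed

lemma J_mv:
  assumes m: "m = 2 * h" and w: "w \<in> carrier_vec m" and k: "k < m"
  shows "(cm (J_mat m) *\<^sub>v w) $ k = (if k < h then w $ (k + h) else - w $ (k - h))"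
proof -
  have J: "J_mat m \<in> carrier_mat m m" unfolding J_mat_def by auto
  have md: "m div 2 = h" using m by simp
  have "(cm (J_mat m) *\<^sub>v w) $ k = (\<Sum>j<m. of_real (J_mat m $$ (k,j)) * w $ j)"
    by (rule cm_mv_index[OF J w k])
  also have "\<dots> = (\<Sum>j<m. if j = (if k < h then k + h else k - h) then
                      (if k < h then w $ j else - w $ j) else 0)"
    by (intro sum.cong refl, insert k, auto simp: J_mat_def md)
  also have "\<dots> = (if k < h then w $ (k + h) else - w $ (k - h))"
    using k m by (auto simp: sum.delta)
  finally show ?thesis .
qed

lemma J_bound:
  assumes m: "m = 2 * h" and w: "w \<in> carrier_vec m"
  shows "cmod (\<Sum>k<m. cnj (w $ k) * (cm (J_mat m) *\<^sub>v w) $ k) \<le> (\<Sum>k<m. (cmod (w $ k))^2)"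
proof -
  define \<sigma> where "\<sigma> k = (if k < h then k + h else k - h)" for k
  have nJ: "cmod ((cm (J_mat m) *\<^sub>v w) $ k) = cmod (w $ \<sigma> k)" if "k < m" for k
    unfolding J_mv[OF m w that] \<sigma>_def by auto
  have bij: "bij_betw \<sigma> {..<m} {..<m}"
    by (rule bij_betw_byWitness[where f' = \<sigma>], auto simp: \<sigma>_def m)
  have re: "(\<Sum>k<m. (cmod (w $ \<sigma> k))^2) = (\<Sum>k<m. (cmod (w $ k))^2)"
    using sum.reindex_bij_betw[OF bij, of "\<lambda>k. (cmod (w $ k))^2"] by simp
  have "cmod (\<Sum>k<m. cnj (w $ k) * (cm (J_mat m) *\<^sub>v w) $ k)
     \<le> (\<Sum>k<m. cmod (cnj (w $ k) * (cm (J_mat m) *\<^sub>v w) $ k))" by (rule norm_sum)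
  also have "\<dots> = (\<Sum>k<m. cmod (w $ k) * cmod (w $ \<sigma> k))"
    by (intro sum.cong refl, simp add: norm_mult nJ)
  also have "\<dots> \<le> (\<Sum>k<m. ((cmod (w $ k))^2 + (cmod (w $ \<sigma> k))^2) / 2)"
  proof (intro sum_mono)
    fix k
    have "0 \<le> (cmod (w $ k) - cmod (w $ \<sigma> k))^2" by simp
    thus "cmod (w $ k) * cmod (w $ \<sigma> k) \<le> ((cmod (w $ k))^2 + (cmod (w $ \<sigma> k))^2) / 2"
      by (simp add: power2_diff)
  qed
  also have "\<dots> = (\<Sum>k<m. (cmod (w $ k))^2)"
    unfolding sum_divide_distrib[symmetric] sum.distrib re by simp
  finally show ?thesis .
qed

lemma adj_id:
  assumes D: "D \<in> carrier_mat p m" and v: "v \<in> carrier_vec p" and y: "y \<in> carrier_vec m"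
  shows "(\<Sum>i<p. cnj (v $ i) * (cm D *\<^sub>v y) $ i) = (\<Sum>k<m. cnj ((cm D\<^sup>T *\<^sub>v v) $ k) * y $ k)"
proof -
  have Dt: "D\<^sup>T \<in> carrier_mat m p" using D by auto
  have "(\<Sum>i<p. cnj (v $ i) * (cm D *\<^sub>v y) $ i) = (\<Sum>i<p. \<Sum>k<m. cnj (v $ i) * (of_real (D $$ (i,k)) * y $ k))"
    by (intro sum.cong refl, simp add: cm_mv_index[OF D y] sum_distrib_left)
  also have "\<dots> = (\<Sum>k<m. \<Sum>i<p. cnj (v $ i) * (of_real (D $$ (i,k)) * y $ k))" by (rule sum.swap)
  also have "\<dots> = (\<Sum>k<m. cnj ((cm D\<^sup>T *\<^sub>v v) $ k) * y $ k)"
  proof (intro sum.cong refl)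
    fix k assume k: "k \<in> {..<m}"
    hence k': "k < m" by simp
    show "(\<Sum>i<p. cnj (v $ i) * (of_real (D $$ (i,k)) * y $ k)) = cnj ((cm D\<^sup>T *\<^sub>v v) $ k) * y $ k"
      unfolding cm_mv_index[OF Dt v k'] cnj_sum sum_distrib_right
      by (intro sum.cong refl, insert k' D, auto)
  qed
  finally show ?thesis .
qed

lemma eig_Delta_bound:
  assumes D: "D \<in> carrier_mat p m" and DD: "D * D\<^sup>T = 1\<^sub>m p" and m: "even m"
  and ev: "eigenvalue (cm (D * J_mat m * D\<^sup>T)) \<mu>"
  shows "cmod \<mu> \<le> 1"
proof -
  obtain h where mh: "m = 2 * h" using m by auto
  have J: "J_mat m \<in> carrier_mat m m" unfolding J_mat_def by auto
  have Dt: "D\<^sup>T \<in> carrier_mat m p" using D by auto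
  from ev obtain v where "eigenvector (cm (D * J_mat m * D\<^sup>T)) v \<mu>" unfolding eigenvalue_def by auto
  hence v: "v \<in> carrier_vec p" and nz: "v \<noteq> 0\<^sub>v p"
    and ev: "cm (D * J_mat m * D\<^sup>T) *\<^sub>v v = \<mu> \<cdot>\<^sub>v v"
    unfolding eigenvector_def using D by auto
  define w where "w = cm D\<^sup>T *\<^sub>v v"
  have w: "w \<in> carrier_vec m" unfolding w_def using Dt v by auto
  have DJDt: "cm (D * J_mat m * D\<^sup>T) = cm D * (cm (J_mat m) * cm D\<^sup>T)"
    using D J Dt by (simp add: of_real_hom.mat_hom_mult[of _ p m _ p] of_real_hom.mat_hom_mult[of _ m m _ p]
      of_real_hom.mat_hom_mult[of _ p m _ m] assoc_mult_mat[of D p m "J_mat m" m])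
  have e1: "cm (D * J_mat m * D\<^sup>T) *\<^sub>v v = cm D *\<^sub>v (cm (J_mat m) *\<^sub>v w)"
  proof -
    have cD: "cm D \<in> carrier_mat p m" and cJ: "cm (J_mat m) \<in> carrier_mat m m"
      and cDt: "cm D\<^sup>T \<in> carrier_mat m p" using D J Dt by auto
    have cJDt: "cm (J_mat m) * cm D\<^sup>T \<in> carrier_mat m p" using cJ cDt by auto
    show ?thesis unfolding DJDt w_def assoc_mult_mat_vec[OF cD cJDt v]
      assoc_mult_mat_vec[OF cJ cDt v] ..
  qed
  have e2: "cm D *\<^sub>v w = v"
  proof -
    have "cm D *\<^sub>v w = (cm D * cm D\<^sup>T) *\<^sub>v v" unfolding w_def using D Dt v by simp
    also have "cm D * cm D\<^sup>T = cm (D * D\<^sup>T)" using D Dt by (simp add: of_real_hom.mat_hom_mult)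
    also have "\<dots> = 1\<^sub>m p" unfolding DD by (rule of_real_hom.mat_hom_one)
    finally show ?thesis using v by simp
  qed
  define V where "V = (\<Sum>i<p. (cmod (v $ i))^2)"
  have nsq: "cnj z * z = of_real ((cmod z)^2)" for z :: complex
    by (metis complex_norm_square mult.commute)
  have WV: "(\<Sum>k<m. (cmod (w $ k))^2) = V"
  proof -
    have "(of_real (\<Sum>k<m. (cmod (w $ k))^2) :: complex) = (\<Sum>k<m. cnj (w $ k) * w $ k)" by (simp add: nsq)
    also have "\<dots> = (\<Sum>i<p. cnj (v $ i) * (cm D *\<^sub>v w) $ i)"
      by (subst adj_id[OF D v w], unfold w_def, rule refl)
    also have "\<dots> = of_real V" unfolding e2 V_def by (simp add: nsq)
    finally have "(of_real (\<Sum>k<m. (cmod (w $ k))^2) :: complex) = of_real V" .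
    thus ?thesis by (simp only: of_real_eq_iff)
  qed
  have "(\<Sum>i<p. cnj (v $ i) * (cm (D * J_mat m * D\<^sup>T) *\<^sub>v v) $ i)
     = (\<Sum>k<m. cnj (w $ k) * (cm (J_mat m) *\<^sub>v w) $ k)"
  proof -
    have Jw: "cm (J_mat m) *\<^sub>v w \<in> carrier_vec m" using J w by auto
    show ?thesis unfolding e1 adj_id[OF D v Jw] w_def[symmetric] ..
  qed
  moreover have "(\<Sum>i<p. cnj (v $ i) * (cm (D * J_mat m * D\<^sup>T) *\<^sub>v v) $ i) = \<mu> * of_real V"
    unfolding ev V_def of_real_sum sum_distrib_left using v
    by (intro sum.cong refl, simp add: nsq)
  ultimately have "cmod (\<mu> * of_real V) \<le> V" using J_bound[OF mh w] WV by simp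
  moreover have "V > 0"
  proof -
    have "\<exists>i<p. v $ i \<noteq> 0"
    proof (rule ccontr)
      assume "\<not> ?thesis"
      hence "v = 0\<^sub>v p" using v by (intro eq_vecI, auto)
      with nz show False by simp
    qed
    then obtain i where i: "i < p" "v $ i \<noteq> 0" by auto
    have "(cmod (v $ i))^2 \<le> V" unfolding V_def
      by (rule member_le_sum, insert i, auto)
    moreover have "(cmod (v $ i))^2 > 0" using i by simp
    ultimately show ?thesis by linarith
  qed
  ultimately show ?thesis by (simp add: norm_mult)
qed

lemma sum_div_mod:
  fixes g :: "nat \<Rightarrow> nat \<Rightarrow> 'a :: comm_monoid_add"
  shows "(\<Sum>j<q*n. g (j div n) (j mod n)) = (\<Sum>a<q. \<Sum>b<n. g a b)"
proof (induct q)
  case (Suc q)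
  have "(\<Sum>j<Suc q * n. g (j div n) (j mod n)) =
     (\<Sum>j\<in>{0..<q*n}. g (j div n) (j mod n)) + (\<Sum>j\<in>{q*n..<q*n+n}. g (j div n) (j mod n))"
    unfolding lessThan_atLeast0 by (subst sum.atLeastLessThan_concat, auto simp: add.commute)
  also have "(\<Sum>j\<in>{q*n..<q*n+n}. g (j div n) (j mod n)) = (\<Sum>b\<in>{0..<n}. g ((b + q*n) div n) ((b + q*n) mod n))"
    using sum.shift_bounds_nat_ivl[of "\<lambda>j. g (j div n) (j mod n)" 0 "q*n" n] by (simp add: add.commute)
  also have "\<dots> = (\<Sum>b<n. g q b)" unfolding lessThan_atLeast0
    by (intro sum.cong refl, auto)
  finally show ?case using Suc by (simp add: lessThan_atLeast0)
qed simp

lemma div_lt: "j < q * n \<Longrightarrow> j div n < q" for j q n :: nat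
  by (simp add: less_mult_imp_div_less)
lemma mod_lt: "j < q * n \<Longrightarrow> j mod n < n" for j q n :: nat
  by (cases "n = 0", auto)
lemma rc_lt: "r < q \<Longrightarrow> c < n \<Longrightarrow> r * n + c < q * n" for r c q n :: nat
proof -
  assume "r < q" "c < n"
  hence "r * n + c < r * n + n" by simp
  also have "\<dots> = Suc r * n" by simp
  also have "\<dots> \<le> q * n" using \<open>r < q\<close> by (intro mult_right_mono, auto)
  finally show ?thesis .
qed

lemma bij_from_kernel:
  fixes N B :: "real mat"
  assumes N: "N \<in> carrier_mat q q" and B: "B \<in> carrier_mat n n"
  and ker: "\<And>X. X \<in> carrier_mat q n \<Longrightarrow> X = N * X * B \<Longrightarrow> X = 0\<^sub>m q n"
  shows "bij_betw (\<lambda>X. X - N * X * B) (carrier_mat q n) (carrier_mat q n)"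
proof -
  define f where "f = (\<lambda>X. X - N * X * B)"
  define vm where "vm = (\<lambda>X :: real mat. vec (q*n) (\<lambda>i. X $$ (i div n, i mod n)))"
  define um where "um = (\<lambda>v :: real vec. mat q n (\<lambda>(r,c). v $ (r*n+c)))"
  define M where "M = mat (q*n) (q*n) (\<lambda>(i,j). (if i = j then 1 else 0)
      - N $$ (i div n, j div n) * B $$ (j mod n, i mod n))"
  have M: "M \<in> carrier_mat (q*n) (q*n)" unfolding M_def by auto
  have vm: "vm X \<in> carrier_vec (q*n)" for X unfolding vm_def by auto
  have um: "um v \<in> carrier_mat q n" for v unfolding um_def by auto
  have umvm: "um (vm X) = X" if X: "X \<in> carrier_mat q n" for X
    unfolding um_def vm_def using X by (intro eq_matI, auto simp: rc_lt)
  have vmum: "vm (um v) = v" if v: "v \<in> carrier_vec (q*n)" for v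
    unfolding um_def vm_def using v by (intro eq_vecI, auto simp: div_lt mod_lt)
  have fc: "f X \<in> carrier_mat q n" if "X \<in> carrier_mat q n" for X
    unfolding f_def using that N B by auto
  have key: "vm (f X) = M *\<^sub>v vm X" if X: "X \<in> carrier_mat q n" for X
  proof (rule eq_vecI)
    fix i assume "i < dim_vec (M *\<^sub>v vm X)"
    hence i: "i < q * n" using M by simp
    define r where "r = i div n"
    define c where "c = i mod n"
    have r: "r < q" and c: "c < n" using i div_lt mod_lt unfolding r_def c_def by auto
    have NXB: "(N * X * B) $$ (r,c) = (\<Sum>a<q. \<Sum>b<n. N $$ (r,a) * B $$ (b,c) * X $$ (a,b))"
    proof -
      have "(N * X * B) $$ (r,c) = (\<Sum>a<q. N $$ (r,a) * (\<Sum>b<n. X $$ (a,b) * B $$ (b,c)))"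
        using N X B r c by (simp add: scalar_prod_def lessThan_atLeast0)
      also have "\<dots> = (\<Sum>a<q. \<Sum>b<n. N $$ (r,a) * B $$ (b,c) * X $$ (a,b))"
        by (simp add: sum_distrib_left algebra_simps)
      finally show ?thesis .
    qed
    have "(M *\<^sub>v vm X) $ i = (\<Sum>j<q*n. M $$ (i,j) * X $$ (j div n, j mod n))"
      using M i unfolding vm_def by (simp add: scalar_prod_def lessThan_atLeast0)
    also have "\<dots> = (\<Sum>j<q*n. (if i = j then X $$ (j div n, j mod n) else 0)
         - N $$ (r, j div n) * B $$ (j mod n, c) * X $$ (j div n, j mod n))"
      unfolding M_def r_def c_def using i by (intro sum.cong refl, auto simp: algebra_simps)
    also have "\<dots> = X $$ (r,c) - (\<Sum>j<q*n. N $$ (r, j div n) * B $$ (j mod n, c) * X $$ (j div n, j mod n))"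
      unfolding sum_subtractf using i by (simp add: r_def c_def)
    also have "(\<Sum>j<q*n. N $$ (r, j div n) * B $$ (j mod n, c) * X $$ (j div n, j mod n))
       = (\<Sum>a<q. \<Sum>b<n. N $$ (r,a) * B $$ (b,c) * X $$ (a,b))"
      by (rule sum_div_mod[of "\<lambda>a b. N $$ (r,a) * B $$ (b,c) * X $$ (a,b)"])
    also have "X $$ (r,c) - \<dots> = vm (f X) $ i"
      unfolding NXB[symmetric] vm_def f_def using i r c X N B by (simp add: r_def c_def)
    finally show "vm (f X) $ i = (M *\<^sub>v vm X) $ i" by simp
  qed (insert M, simp add: vm_def)
  have inj0: "v = 0\<^sub>v (q*n)" if v: "v \<in> carrier_vec (q*n)" and Mv: "M *\<^sub>v v = 0\<^sub>v (q*n)" for v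
  proof -
    define X where "X = um v"
    have X: "X \<in> carrier_mat q n" unfolding X_def by (rule um)
    have "vm (f X) = 0\<^sub>v (q*n)" using key[OF X] unfolding X_def vmum[OF v] Mv .
    hence "um (vm (f X)) = um (0\<^sub>v (q*n))" by simp
    hence "f X = um (0\<^sub>v (q*n))" unfolding umvm[OF fc[OF X]] .
    hence fX: "f X = 0\<^sub>m q n" unfolding um_def by (auto intro!: eq_matI simp: rc_lt)
    have "X = N * X * B"
    proof (rule eq_matI)
      fix i j assume ij: "i < dim_row (N * X * B)" "j < dim_col (N * X * B)"
      hence "f X $$ (i,j) = 0" using fX N B by simp
      thus "X $$ (i,j) = (N * X * B) $$ (i,j)" unfolding f_def using ij X N B by simp
    qed (insert X N B, auto)
    from ker[OF X this] have "X = 0\<^sub>m q n" .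
    hence "vm X = vm (0\<^sub>m q n)" by simp
    hence "v = vm (0\<^sub>m q n)" unfolding X_def vmum[OF v] .
    thus ?thesis unfolding vm_def by (auto intro!: eq_vecI simp: div_lt mod_lt)
  qed
  have "det M \<noteq> 0" using inj0 det_0_iff_vec_prod_zero_field[OF M] by blast
  from det_non_zero_imp_unit[OF M this, of "()"]
  obtain M' where M': "M' \<in> carrier_mat (q*n) (q*n)" and MM': "M * M' = 1\<^sub>m (q*n)" and M'M: "M' * M = 1\<^sub>m (q*n)"
    unfolding Units_def ring_mat_def by auto
  show ?thesis
  proof (unfold f_def[symmetric], rule bij_betw_imageI)
    show "inj_on f (carrier_mat q n)"
    proof (rule inj_onI)
      fix X Y assume X: "X \<in> carrier_mat q n" and Y: "Y \<in> carrier_mat q n" and e: "f X = f Y"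
      have "M *\<^sub>v vm X = M *\<^sub>v vm Y" using key[OF X] key[OF Y] e by simp
      hence "M' *\<^sub>v (M *\<^sub>v vm X) = M' *\<^sub>v (M *\<^sub>v vm Y)" by simp
      hence "vm X = vm Y" using M M' M'M vm
        by (metis assoc_mult_mat_vec one_mult_mat_vec)
      thus "X = Y" using umvm[OF X] umvm[OF Y] by metis
    qed
    show "f ` carrier_mat q n = carrier_mat q n"
    proof
      show "f ` carrier_mat q n \<subseteq> carrier_mat q n" using fc by auto
      show "carrier_mat q n \<subseteq> f ` carrier_mat q n"
      proof
        fix Y :: "real mat" assume Y: "Y \<in> carrier_mat q n"
        define X where "X = um (M' *\<^sub>v vm Y)"
        have X: "X \<in> carrier_mat q n" unfolding X_def by (rule um)
        have v: "M' *\<^sub>v vm Y \<in> carrier_vec (q*n)" using M' vm by auto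
        have "vm (f X) = M *\<^sub>v (M' *\<^sub>v vm Y)" using key[OF X] unfolding X_def vmum[OF v] .
        also have "\<dots> = vm Y" using M M' MM' vm
          by (metis assoc_mult_mat_vec one_mult_mat_vec)
        finally have "um (vm (f X)) = um (vm Y)" by simp
        hence "f X = Y" unfolding umvm[OF fc[OF X]] umvm[OF Y] .
        thus "Y \<in> f ` carrier_mat q n" using X by blast
      qed
    qed
  qed
qed

lemma real_kernel_bij:
  fixes N B :: "real mat"
  assumes N: "N \<in> carrier_mat q q" and B: "B \<in> carrier_mat n n"
  and sr: "spectral_radius (cm N) < 1"
  and evB: "\<And>\<mu>. eigenvalue (cm B) \<mu> \<Longrightarrow> cmod \<mu> \<le> 1"
  shows "bij_betw (\<lambda>X. X - N * X * B) (carrier_mat q n) (carrier_mat q n)"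
proof (rule bij_from_kernel[OF N B])
  fix X assume X: "X \<in> carrier_mat q n" and e: "X = N * X * B"
  have cN: "cm N \<in> carrier_mat q q" and cB: "cm B \<in> carrier_mat n n" and cX: "cm X \<in> carrier_mat q n"
    using N B X by auto
  have NX: "N * X \<in> carrier_mat q n" using N X by auto
  have "cm X = cm (N * X * B)" using e by (rule arg_cong)
  also have "\<dots> = cm N * cm X * cm B"
    unfolding of_real_hom.mat_hom_mult[OF NX B] of_real_hom.mat_hom_mult[OF N X] ..
  finally have ce: "cm X = cm N * cm X * cm B" .
  have Nok: "\<And>\<mu> v. cmod \<mu> \<le> 1 \<Longrightarrow> v \<in> carrier_vec q \<Longrightarrow> v = \<mu> \<cdot>\<^sub>v (cm N *\<^sub>v v) \<Longrightarrow> v = 0\<^sub>v q"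
    using Nok_sr[OF cN sr] by blast
  have "cm X = 0\<^sub>m q n"
    using kernel_zero[OF cN cB cX ce evB Nok] .
  thus "X = 0\<^sub>m q n" using X
    by (intro eq_matI, auto, metis carrier_matD(1) carrier_matD(2) index_map_mat(1) index_zero_mat(1) of_real_eq_0_iff)
qed

theorem mainTheorem8:
  fixes q m1 m2 p :: nat
    and P22 Q22 Theta2 Xi D N S :: "real mat"
  assumes "even q" and "even m1" and "even m2"
    and "sym_mat q P22" and "pos_def_mat q P22"
    and "sym_mat q Q22" and "pos_def_mat q Q22"
    and "antisym_mat q Theta2" and "invertible_mat Theta2"
    and "herm_psd_mat q (plus_i_mat P22 Theta2)"
    and "antisym_mat q Xi"
    and "N \<in> carrier_mat q q" and "Q22 * N = Xi"
    and "S \<in> carrier_mat q q" and "S * P22 = Theta2"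
    and "D \<in> carrier_mat p m1" and "D * D\<^sup>T = 1\<^sub>m p"
    and "spectral_radius (map_mat complex_of_real N) < 1"
  shows "bij_betw (\<lambda>X. X - N * X * S) (carrier_mat q q) (carrier_mat q q) \<and>
         bij_betw (\<lambda>X. X - N * X * J_mat m2) (carrier_mat q m2) (carrier_mat q m2) \<and>
         bij_betw (\<lambda>X. X - N * X * (D * J_mat m1 * D\<^sup>T)) (carrier_mat q p) (carrier_mat q p)"
proof (intro conjI)
  note a = assms
  show "bij_betw (\<lambda>X. X - N * X * S) (carrier_mat q q) (carrier_mat q q)"
    by (rule real_kernel_bij[OF a(12) a(14) a(18)], rule eig_S_bound[OF a(4) a(5) a(8) a(10) a(14) a(15)])
  have J: "J_mat m2 \<in> carrier_mat m2 m2" unfolding J_mat_def by auto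
  have Jid: "1\<^sub>m m2 * J_mat m2 * (1\<^sub>m m2)\<^sup>T = J_mat m2" using J by simp
  show "bij_betw (\<lambda>X. X - N * X * J_mat m2) (carrier_mat q m2) (carrier_mat q m2)"
  proof (rule real_kernel_bij[OF a(12) J a(18)])
    fix \<mu> assume "eigenvalue (cm (J_mat m2)) \<mu>"
    hence "eigenvalue (cm (1\<^sub>m m2 * J_mat m2 * (1\<^sub>m m2)\<^sup>T)) \<mu>" unfolding Jid .
    moreover have "1\<^sub>m m2 * (1\<^sub>m m2)\<^sup>T = (1\<^sub>m m2 :: real mat)" by simp
    ultimately show "cmod \<mu> \<le> 1" using eig_Delta_bound[OF one_carrier_mat _ a(3)] by blast
  qed
  have J1: "J_mat m1 \<in> carrier_mat m1 m1" unfolding J_mat_def by auto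
  have DJD: "D * J_mat m1 * D\<^sup>T \<in> carrier_mat p p" using a(16) J1 by auto
  show "bij_betw (\<lambda>X. X - N * X * (D * J_mat m1 * D\<^sup>T)) (carrier_mat q p) (carrier_mat q p)"
    by (rule real_kernel_bij[OF a(12) DJD a(18)], rule eig_Delta_bound[OF a(16) a(17) a(2)])
qed

end
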